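(* Let $f:\mathbb{R}^N\to\mathbb{R}^N$ be $C^2$, equivariant with respect to a compact group $\Gamma\subseteq O(N)$, and let $x_\ast$ be a periodic solution of $\dot x=f(x)$ with minimal period $p>0$ which is a discrete wave with $H/K\cong\mathbb{Z}_n$. Fix a spatio-temporal symmetry $h\in H$ and $b\in\mathbb{R}$, and let $m\in\{1,\dots,n\}$ be such that $\theta_h=\frac{m}{n}p$. Let $U(t,s)$, $t\ge s$, be the family of solution operators of the linear DDE $$\dot y(t)=f'(x_\ast(t))y(t)+b\,[y(t)-h\,y(t-\theta_h)],$$ and let $U_h=h^{-1}U(\tfrac{m}{n}p,0)$ be the twisted monodromy operator. Then $$U(p,0)^m=h^nU_h^n.$$
   Context: $\Gamma$-equivariance means $f(\gamma x)=\gamma f(x)$ for all $x\in\mathbb{R}^N$, $\gamma\in\Gamma$. $K=\{\gamma\in\Gamma\mid\gamma x_\ast(0)=x_\ast(0)\}$, $H=\{\gamma\in\Gamma\mid\gamma\mathcal{O}=\mathcal{O}\}$ with $\mathcal{O}$ the orbit of $x_\ast$; for $h\in H$, $\theta_h\in[0,p)$ is defined by $hx_\ast(t)=x_\ast(t+\theta_h)$. $U(t,s)$ acts on $C([-\theta_h,0],\mathbb{R}^N)$, mapping an initial history $\varphi$ at time $s$ (i.e. $y(s+\vartheta)=\varphi(\vartheta)$, $\vartheta\in[-\theta_h,0]$) to the history segment $y_t(\vartheta)=y(t+\vartheta)$ of the solution. Matrices act on this function space pointwise. *)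

theory Defs
  imports "HOL-Analysis.Analysis" "HOL-Algebra.Elementary_Groups"
begin

text \<open>Compact subgroup of the orthogonal group O(N), N = CARD('n).\<close>
definition compact_orth_group :: "(real^'n^'n) set \<Rightarrow> bool" where
  "compact_orth_group G \<longleftrightarrow> compact G \<and> mat 1 \<in> G \<and>
     (\<forall>g\<in>G. orthogonal_matrix g) \<and>
     (\<forall>g\<in>G. \<forall>g'\<in>G. g ** g' \<in> G) \<and> (\<forall>g\<in>G. matrix_inv g \<in> G)"

definition equivariant :: "(real^'n^'n) set \<Rightarrow> (real^'n \<Rightarrow> real^'n) \<Rightarrow> bool" where
  "equivariant G f \<longleftrightarrow> (\<forall>g\<in>G. \<forall>x. f (g *v x) = g *v f x)"

text \<open>Isotropy subgroup K of x(0) and spatio-temporal symmetry group H of the orbit.\<close>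
definition Kgrp :: "(real^'n^'n) set \<Rightarrow> (real \<Rightarrow> real^'n) \<Rightarrow> (real^'n^'n) set" where
  "Kgrp G x = {g\<in>G. g *v x 0 = x 0}"

definition Hgrp :: "(real^'n^'n) set \<Rightarrow> (real \<Rightarrow> real^'n) \<Rightarrow> (real^'n^'n) set" where
  "Hgrp G x = {g\<in>G. (\<lambda>v. g *v v) ` range x = range x}"

text \<open>H as a group (under matrix multiplication), in the HOL-Algebra sense.\<close>
definition mat_group :: "(real^'n^'n) set \<Rightarrow> (real^'n^'n) monoid" where
  "mat_group S = \<lparr>carrier = S, monoid.mult = (**), one = mat 1\<rparr>"

text \<open>theta_h in [0,p) with h x(t) = x(t + theta_h).\<close>
definition theta :: "real \<Rightarrow> (real \<Rightarrow> real^'n) \<Rightarrow> real^'n^'n \<Rightarrow> real" where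
  "theta p x h = (THE th. 0 \<le> th \<and> th < p \<and> (\<forall>t. h *v x t = x (t + th)))"

text \<open>Solution of the linear DDE
  y'(t) = Df(x(t)) y(t) + b (y(t) - h y(t - th)) for t \<ge> s with history phi on [-th,0]
  at time s; y is set to 0 before s - th (normalisation making it unique).\<close>
definition dde_sol ::
  "(real^'n \<Rightarrow> (real^'n) \<Rightarrow>\<^sub>L (real^'n)) \<Rightarrow> (real \<Rightarrow> real^'n) \<Rightarrow> real \<Rightarrow> real^'n^'n \<Rightarrow> real
   \<Rightarrow> real \<Rightarrow> (real \<Rightarrow> real^'n) \<Rightarrow> (real \<Rightarrow> real^'n) \<Rightarrow> bool" where
  "dde_sol Df x b h th s phi y \<longleftrightarrow>
     continuous_on {s - th..} y \<and>
     (\<forall>r. r < s - th \<longrightarrow> y r = 0) \<and>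
     (\<forall>v\<in>{-th..0}. y (s + v) = phi v) \<and>
     (\<forall>t\<ge>s. (y has_vector_derivative
         (Df (x t) (y t) + b *\<^sub>R (y t - h *v y (t - th)))) (at t within {s..}))"

text \<open>Phase space C([-th,0], R^N); functions are extended by 0 outside [-th,0].\<close>
definition Cspace :: "real \<Rightarrow> (real \<Rightarrow> real^'n) set" where
  "Cspace th = {phi. continuous_on {-th..0} phi \<and> (\<forall>v. v \<notin> {-th..0} \<longrightarrow> phi v = 0)}"

text \<open>Solution operator U(t,s): history at s mapped to the segment y_t.\<close>
definition solop ::
  "(real^'n \<Rightarrow> (real^'n) \<Rightarrow>\<^sub>L (real^'n)) \<Rightarrow> (real \<Rightarrow> real^'n) \<Rightarrow> real \<Rightarrow> real^'n^'n \<Rightarrow> real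
   \<Rightarrow> real \<Rightarrow> real \<Rightarrow> (real \<Rightarrow> real^'n) \<Rightarrow> (real \<Rightarrow> real^'n)" where
  "solop Df x b h th t s phi =
     (let y = (THE y. dde_sol Df x b h th s phi y)
      in (\<lambda>v. if v \<in> {-th..0} then y (t + v) else 0))"

text \<open>Pointwise action of a matrix on the function space.\<close>
definition mat_act :: "real^'n^'n \<Rightarrow> (real \<Rightarrow> real^'n) \<Rightarrow> (real \<Rightarrow> real^'n)" where
  "mat_act M phi = (\<lambda>v. M *v phi v)"

end

theory Submission
  imports Defs
begin


declare continuous_on_apply_bcontfun[continuous_intros]

lemma uniq_lemma:
  fixes e e' :: "real \<Rightarrow> 'a::real_normed_vector"
  assumes cont: "continuous_on {a..} e"
    and zero: "\<And>r. a - th \<le> r \<Longrightarrow> r \<le> a \<Longrightarrow> e r = 0"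
    and thpos: "th \<ge> 0" and Cpos: "C \<ge> 0"
    and der: "\<And>t. a \<le> t \<Longrightarrow> (e has_vector_derivative e' t) (at t within {a..})"
    and bnd: "\<And>t. a \<le> t \<Longrightarrow> norm (e' t) \<le> C * (norm (e t) + norm (e (t - th)))"
  shows "\<And>t. a \<le> t \<Longrightarrow> e t = 0"
proof -
  define d where "d = 1 / (4*C+4)"
  have dpos: "d > 0" using Cpos by (simp add: d_def)
  have d2: "2*C*d \<le> 1/2" using Cpos by (simp add: d_def field_simps)
  have step: "\<forall>r. a - th \<le> r \<and> r \<le> t0 + d \<longrightarrow> e r = 0"
    if t0a: "a \<le> t0" and z0: "\<forall>r. a - th \<le> r \<and> r \<le> t0 \<longrightarrow> e r = 0" for t0
  proof -
    have sub: "{t0..t0+d} \<subseteq> {a..}" using t0a by auto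
    have "continuous_on {t0..t0+d} (\<lambda>t. norm (e t))"
      by (intro continuous_intros continuous_on_subset[OF cont sub])
    then obtain s where s: "s \<in> {t0..t0+d}" and smax: "\<And>t. t \<in> {t0..t0+d} \<Longrightarrow> norm (e t) \<le> norm (e s)"
      using continuous_attains_sup[of "{t0..t0+d}" "\<lambda>t. norm (e t)"] dpos by auto
    define M where "M = norm (e s)"
    have Mb: "norm (e r) \<le> M" if "a - th \<le> r" "r \<le> t0 + d" for r
    proof (cases "r \<le> t0")
      case True then show ?thesis using z0 that by (simp add: M_def)
    next
      case False then show ?thesis using smax that by (simp add: M_def)
    qed
    have db: "norm (e' r) \<le> 2*C*M" if "r \<in> {t0..t0+d}" for r
    proof -
      have "norm (e' r) \<le> C * (norm (e r) + norm (e (r - th)))" using bnd that t0a by auto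
      also have "\<dots> \<le> C * (M + M)"
        using that thpos t0a by (intro mult_left_mono add_mono Mb Cpos) auto
      finally show ?thesis by simp
    qed
    have tb: "norm (e t) \<le> 2*C*M*d" if t: "t \<in> {t0..t0+d}" for t
    proof -
      have "norm (e t - e t0) \<le> (2*C*M) * norm (t - t0)"
      proof (rule differentiable_bound[where S="{t0..t}" and f'="\<lambda>r h. h *\<^sub>R e' r"])
        show "convex {t0..t}" by (rule convex_real_interval)
        fix r assume r: "r \<in> {t0..t}"
        show "(e has_derivative (\<lambda>h. h *\<^sub>R e' r)) (at r within {t0..t})"
          using der[of r] r t0a has_vector_derivative_within_subset[of e "e' r" r "{a..}" "{t0..t}"]
          by (auto simp: has_vector_derivative_def)
        have "onorm (\<lambda>h. h *\<^sub>R e' r) = onorm (\<lambda>h::real. h) * norm (e' r)"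
          by (rule onorm_scaleR_left) (rule bounded_linear_ident)
        also have "\<dots> = norm (e' r)" using onorm_id[where 'a=real] by (simp add: id_def)
        finally show "onorm (\<lambda>h. h *\<^sub>R e' r) \<le> 2*C*M" using db r t by auto
      qed (use t in auto)
      moreover have "e t0 = 0" using z0 thpos t0a by auto
      ultimately have "norm (e t) \<le> (2*C*M) * norm (t - t0)" by simp
      also have "\<dots> \<le> (2*C*M) * d"
        using t Cpos by (intro mult_left_mono) (auto simp: M_def)
      finally show ?thesis .
    qed
    have "M \<le> 2*C*M*d" using tb[OF s] by (simp add: M_def)
    also have "\<dots> = (2*C*d) * M" by simp
    also have "\<dots> \<le> (1/2) * M" using d2 by (intro mult_right_mono) (auto simp: M_def)
    finally have "M \<le> 0" by simp
    then show ?thesis using Mb by (metis norm_le_zero_iff order_trans)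
  qed
  have all: "\<forall>r. a - th \<le> r \<and> r \<le> a + real k * d \<longrightarrow> e r = 0" for k :: nat
  proof (induction k)
    case 0 then show ?case using zero by auto
  next
    case (Suc k)
    have "a \<le> a + real k * d" using dpos by simp
    from step[OF this Suc.IH] show ?case by (simp add: algebra_simps)
  qed
  fix t assume t: "a \<le> t"
  obtain k :: nat where "(t - a) / d \<le> real k" using real_arch_simple by blast
  then have "t \<le> a + real k * d" using dpos by (simp add: field_simps)
  then show "e t = 0" using all[of k] t thpos by auto
qed

lemma int_exp_bound:
  fixes g :: "real \<Rightarrow> 'a::banach"
  assumes gc: "continuous_on {0..t} g" and t: "0 \<le> t" and K: "0 < K"
    and gb: "\<And>r. r \<in> {0..t} \<Longrightarrow> norm (g r) \<le> B * exp (K * r)"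
  shows "norm (integral {0..t} g) \<le> B * exp (K * t) / K"
proof -
  have B0: "0 \<le> B" using gb[of 0] t by (smt (verit) exp_zero mult_cancel_left1 norm_ge_zero atLeastAtMost_iff)
  have ftc: "((\<lambda>r. B * exp (K * r)) has_integral (B * exp (K * t) / K - B * exp (K * 0) / K)) {0..t}"
  proof (rule fundamental_theorem_of_calculus[OF t])
    fix x :: real assume "x \<in> {0..t}"
    have "((\<lambda>r. B * exp (K * r) / K) has_real_derivative (B * (exp (K * x) * K) / K)) (at x within {0..t})"
      using K by (intro derivative_eq_intros) auto
    then show "((\<lambda>r. B * exp (K * r) / K) has_vector_derivative B * exp (K * x)) (at x within {0..t})"
      using K by (simp add: has_real_derivative_iff_has_vector_derivative)
  qed
  have "norm (integral {0..t} g) \<le> integral {0..t} (\<lambda>r. B * exp (K * r))"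
    by (rule integral_norm_bound_integral) (auto intro!: integrable_continuous_interval gc continuous_intros gb)
  also have "\<dots> = B * exp (K * t) / K - B / K" using integral_unique[OF ftc] by simp
  also have "\<dots> \<le> B * exp (K * t) / K" using B0 K by simp
  finally show ?thesis .
qed

lemma lin_bound:
  fixes A :: "(real^'n) \<Rightarrow>\<^sub>L (real^'n)" and h :: "real^'n^'n"
  assumes "norm A \<le> L" "\<And>w. norm (h *v w) \<le> Bh * norm w" "norm a1 \<le> N" "norm a2 \<le> N" "0 \<le> N"
    "0 \<le> Bh"
  shows "norm (A a1 + b *\<^sub>R (a1 - h *v a2)) \<le> (L + \<bar>b\<bar> + \<bar>b\<bar> * Bh) * N"
proof -
  have L0: "0 \<le> L" using assms(1) norm_ge_zero order_trans by blast
  have "norm (A a1) \<le> L * N"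
    by (meson assms(1,3) L0 norm_blinfun norm_ge_zero mult_mono order_trans)
  moreover have "norm (h *v a2) \<le> Bh * N"
    using assms(2)[of a2] assms(4,6) by (meson mult_left_mono order_trans)
  moreover have "norm (b *\<^sub>R (a1 - h *v a2)) \<le> \<bar>b\<bar> * (norm a1 + norm (h *v a2))"
    by (simp add: mult_left_mono norm_triangle_ineq4)
  ultimately have "norm (A a1 + b *\<^sub>R (a1 - h *v a2)) \<le> L * N + \<bar>b\<bar> * (N + Bh * N)"
    using assms(3) by (smt (verit) abs_ge_zero mult_left_mono norm_triangle_ineq)
  then show ?thesis by (simp add: algebra_simps)
qed

lemma dde_exist:
  fixes A :: "real \<Rightarrow> ((real^'n) \<Rightarrow>\<^sub>L (real^'n))" and h :: "real^'n^'n" and phi :: "real \<Rightarrow> real^'n"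
  assumes Acont: "continuous_on UNIV A" and Abnd: "\<And>t. norm (A t) \<le> L"
    and thpos: "th > 0" and phic: "continuous_on {-th..0} phi"
  shows "\<exists>y. continuous_on {-th..} y \<and> (\<forall>r. r < -th \<longrightarrow> y r = 0) \<and> (\<forall>v\<in>{-th..0}. y v = phi v) \<and>
        (\<forall>t\<ge>0. (y has_vector_derivative (A t (y t) + b *\<^sub>R (y t - h *v y (t - th)))) (at t within {0..}))"
proof -
  have L0: "0 \<le> L" using Abnd[of 0] norm_ge_zero order_trans by blast
  obtain Bh where Bh: "Bh > 0" "\<And>w. norm (h *v w) \<le> norm w * Bh"
    using bounded_linear.pos_bounded[OF matrix_vector_mul_bounded_linear[of h]] by blast
  have Bh': "\<And>w. norm (h *v w) \<le> Bh * norm w" using Bh by (simp add: mult.commute)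
  obtain Mp where Mp: "Mp > 0" "\<And>v. v \<in> {-th..0} \<Longrightarrow> norm (phi v) \<le> Mp"
    using compact_imp_bounded[OF compact_continuous_image[OF phic compact_Icc]]
    unfolding bounded_pos by auto
  define C where "C = L + \<bar>b\<bar> + \<bar>b\<bar> * Bh"
  have C0: "0 \<le> C" using L0 Bh by (simp add: C_def)
  define K where "K = 2 * C + 1"
  have K0: "0 < K" using C0 by (simp add: K_def)
  define yh where "yh u r = (if r \<le> 0 then phi r - phi 0 + apply_bcontfun u 0 else exp (K*r) *\<^sub>R apply_bcontfun u r)"
    for u :: "real \<Rightarrow>\<^sub>C (real^'n)" and r
  define F where "F u r = A r (exp (K*r) *\<^sub>R apply_bcontfun u r) + b *\<^sub>R (exp (K*r) *\<^sub>R apply_bcontfun u r - h *v yh u (r - th))"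
    for u r
  define G where "G u t = phi 0 + integral {0..t} (F u)" for u t
  define Tf where "Tf u t = exp (-(K * max 0 t)) *\<^sub>R G u (max 0 t)" for u t

  have yhc: "continuous_on {-th..} (yh u)" for u
  proof -
    have "continuous_on {-th..} (\<lambda>r. if r \<le> 0 then phi r - phi 0 + apply_bcontfun u 0 else exp (K*r) *\<^sub>R apply_bcontfun u r)"
    proof (rule continuous_on_cases_1)
      have e: "{t \<in> {-th..}. t \<le> 0} = {-th..0}" by auto
      show "continuous_on {t \<in> {-th..}. t \<le> 0} (\<lambda>r. phi r - phi 0 + apply_bcontfun u 0)"
        unfolding e by (intro continuous_intros phic)
      show "continuous_on {t \<in> {-th..}. 0 \<le> t} (\<lambda>r. exp (K*r) *\<^sub>R apply_bcontfun u r)"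
        by (intro continuous_intros)
    qed simp
    then show ?thesis by (simp add: yh_def[abs_def])
  qed
  have Fc: "continuous_on {0..} (F u)" for u
  proof -
    have "continuous_on {0..} (\<lambda>r. yh u (r - th))"
      by (rule continuous_on_compose2[OF yhc[of u]]) (auto intro!: continuous_intros)
    then have "continuous_on {0..} (\<lambda>r. h *v yh u (r - th))"
      by (rule bounded_linear.continuous_on[OF matrix_vector_mul_bounded_linear])
    then show ?thesis unfolding F_def[abs_def]
      by (intro continuous_intros continuous_on_subset[OF Acont]) auto
  qed
  have Fci: "continuous_on {0..t} (F u)" for u t by (rule continuous_on_subset[OF Fc]) auto
  have Fint: "F u integrable_on {0..t}" for u t by (rule integrable_continuous_interval[OF Fci])
  have yhb: "norm (yh u (r - th)) \<le> (norm u + 2*Mp) * exp (K*r)" if "0 \<le> r" for u r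
  proof (cases "r - th \<le> 0")
    case True
    have "norm (phi (r - th) - phi 0 + apply_bcontfun u 0) \<le> Mp + Mp + norm u"
      using Mp(2)[of "r - th"] Mp(2)[of 0] norm_bounded[of u 0] True that thpos
      by (smt (verit, best) atLeastAtMost_iff norm_triangle_ineq norm_triangle_ineq4)
    also have "\<dots> \<le> (norm u + 2*Mp) * 1" by simp
    also have "\<dots> \<le> (norm u + 2*Mp) * exp (K*r)"
      using that K0 Mp by (intro mult_left_mono) auto
    finally show ?thesis using True by (simp add: yh_def)
  next
    case False
    have "norm (exp (K*(r-th)) *\<^sub>R apply_bcontfun u (r-th)) \<le> exp (K*(r-th)) * norm u"
      using norm_bounded[of u] by (simp add: mult_left_mono)
    also have "\<dots> \<le> exp (K*r) * (norm u + 2*Mp)"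
      using K0 thpos Mp by (intro mult_mono) auto
    finally show ?thesis using False by (simp add: yh_def mult.commute)
  qed
  have ub: "norm (exp (K*r) *\<^sub>R apply_bcontfun u r) \<le> (norm u + 2*Mp) * exp (K*r)" for u r
  proof -
    have "norm (exp (K*r) *\<^sub>R apply_bcontfun u r) \<le> exp (K*r) * norm u"
      using norm_bounded[of u] by (simp add: mult_left_mono)
    also have "\<dots> \<le> exp (K*r) * (norm u + 2*Mp)" using Mp by (intro mult_left_mono) auto
    finally show ?thesis by (simp add: mult.commute)
  qed
  have Fb: "norm (F u r) \<le> (C * (norm u + 2*Mp)) * exp (K*r)" if "0 \<le> r" for u r
  proof -
    have "norm (F u r) \<le> C * ((norm u + 2*Mp) * exp (K*r))"
      unfolding F_def C_def
      by (rule lin_bound[OF Abnd Bh' ub yhb[OF that]]) (use Mp Bh in auto)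
    then show ?thesis by (simp add: mult.assoc)
  qed
  have Tfc: "continuous_on UNIV (Tf u)" for u
  proof (rule continuous_at_imp_continuous_on, intro ballI)
    fix t0 :: real
    define T0 where "T0 = \<bar>t0\<bar> + 1"
    have "continuous_on {0..T0} (G u)"
      unfolding G_def[abs_def] by (intro continuous_intros indefinite_integral_continuous_1 Fint)
    then have "continuous_on {-T0..T0} (\<lambda>t. G u (max 0 t))"
      by (rule continuous_on_compose2) (auto intro!: continuous_intros simp: T0_def)
    then have "continuous_on {-T0..T0} (Tf u)"
      unfolding Tf_def[abs_def] by (intro continuous_intros)
    moreover have "t0 \<in> interior {-T0..T0}" by (auto simp: T0_def)
    ultimately show "isCont (Tf u) t0" by (rule continuous_on_interior)
  qed
  have Tfb: "norm (Tf u t) \<le> norm (phi 0) + C * (norm u + 2*Mp) / K" for u t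
  proof -
    define s where "s = max 0 t"
    have s0: "0 \<le> s" by (simp add: s_def)
    have "norm (integral {0..s} (F u)) \<le> (C * (norm u + 2*Mp)) * exp (K * s) / K"
      by (rule int_exp_bound[OF Fci s0 K0 Fb]) auto
    then have "norm (G u s) \<le> norm (phi 0) + (C * (norm u + 2*Mp)) * exp (K * s) / K"
      unfolding G_def by (smt (verit) norm_triangle_ineq)
    then have "exp (-(K * s)) * norm (G u s) \<le> exp (-(K * s)) * (norm (phi 0) + (C * (norm u + 2*Mp)) * exp (K * s) / K)"
      by (intro mult_left_mono) auto
    also have "\<dots> = exp (-(K * s)) * norm (phi 0) + C * (norm u + 2*Mp) / K"
      by (simp add: algebra_simps exp_minus field_simps)
    also have "\<dots> \<le> norm (phi 0) + C * (norm u + 2*Mp) / K"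
      using s0 K0 by (simp add: mult_left_le_one_le)
    finally show ?thesis by (simp add: Tf_def s_def)
  qed
  define T where "T u = Bcontfun (Tf u)" for u
  have Tapp: "apply_bcontfun (T u) = Tf u" for u
    unfolding T_def by (rule Bcontfun_inverse) (rule bcontfun_normI[OF Tfc Tfb])
  have contr: "dist (T u1) (T u2) \<le> (1/2) * dist u1 u2" for u1 u2
  proof (rule dist_bound)
    fix t :: real
    define D where "D = dist u1 u2"
    define s where "s = max 0 t"
    have s0: "0 \<le> s" by (simp add: s_def)
    have Dd: "norm (apply_bcontfun u1 x - apply_bcontfun u2 x) \<le> D" for x
      using dist_bounded[of u1 x u2] by (simp add: D_def dist_norm)
    have D0: "0 \<le> D" by (simp add: D_def)
    have eq: "F u1 r - F u2 r = A r (exp (K*r) *\<^sub>R (apply_bcontfun u1 r - apply_bcontfun u2 r))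
       + b *\<^sub>R (exp (K*r) *\<^sub>R (apply_bcontfun u1 r - apply_bcontfun u2 r) - h *v (yh u1 (r - th) - yh u2 (r - th)))" for r
      unfolding F_def by (simp add: blinfun.diff_right scaleR_diff_right matrix_vector_mult_diff_distrib algebra_simps)
    have db: "norm (F u1 r - F u2 r) \<le> (C * D) * exp (K*r)" if r0: "0 \<le> r" for r
    proof -
      have a1: "norm (exp (K*r) *\<^sub>R (apply_bcontfun u1 r - apply_bcontfun u2 r)) \<le> D * exp (K*r)"
        using Dd[of r] by (simp add: mult_left_mono mult.commute)
      have a2: "norm (yh u1 (r - th) - yh u2 (r - th)) \<le> D * exp (K*r)"
      proof (cases "r - th \<le> 0")
        case True
        have "norm (yh u1 (r - th) - yh u2 (r - th)) = norm (apply_bcontfun u1 0 - apply_bcontfun u2 0)"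
          using True by (simp add: yh_def)
        also have "\<dots> \<le> D * 1" using Dd by simp
        also have "\<dots> \<le> D * exp (K*r)" using D0 K0 r0 by (intro mult_left_mono) auto
        finally show ?thesis .
      next
        case False
        have "norm (yh u1 (r - th) - yh u2 (r - th)) = exp (K*(r-th)) * norm (apply_bcontfun u1 (r-th) - apply_bcontfun u2 (r-th))"
          using False by (simp add: yh_def scaleR_diff_right[symmetric])
        also have "\<dots> \<le> exp (K*r) * D" using K0 thpos D0 Dd by (intro mult_mono) auto
        finally show ?thesis by (simp add: mult.commute)
      qed
      show ?thesis unfolding eq C_def
        using lin_bound[OF Abnd Bh' a1 a2] D0 Bh by (simp add: mult.assoc)
    qed
    have "Tf u1 t - Tf u2 t = exp (-(K * s)) *\<^sub>R (integral {0..s} (\<lambda>r. F u1 r - F u2 r))"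
      by (simp add: Tf_def G_def s_def integral_diff[OF Fint Fint] scaleR_diff_right scaleR_add_right)
    then have "norm (Tf u1 t - Tf u2 t) = exp (-(K * s)) * norm (integral {0..s} (\<lambda>r. F u1 r - F u2 r))"
      by simp
    also have "\<dots> \<le> exp (-(K * s)) * ((C * D) * exp (K * s) / K)"
      by (intro mult_left_mono int_exp_bound[OF _ s0 K0 db]) (auto intro!: continuous_intros Fci)
    also have "\<dots> = C * D / K" by (simp add: exp_minus field_simps)
    also have "\<dots> \<le> (1/2) * D" using C0 D0 K0 by (simp add: K_def field_simps)
    finally show "dist (T u1 t) (T u2 t) \<le> (1/2) * dist u1 u2"
      by (simp add: Tapp dist_norm D_def)
  qed
  obtain u where Tuu: "T u = u"
    using banach_fix_type[of "1/2" T] contr by auto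
  have ufix: "apply_bcontfun u t = Tf u t" for t using Tuu Tapp by metis
  have u0: "apply_bcontfun u 0 = phi 0" using ufix[of 0] by (simp add: Tf_def G_def)
  have uG: "exp (K*t) *\<^sub>R apply_bcontfun u t = G u t" if "0 \<le> t" for t
    using ufix[of t] that by (simp add: Tf_def exp_minus)
  define y where "y r = (if r < -th then 0 else if r \<le> 0 then phi r else exp (K*r) *\<^sub>R apply_bcontfun u r)" for r
  have yyh: "y r = yh u r" if "-th \<le> r" for r
    using that u0 by (simp add: y_def yh_def)
  have yG: "y r = G u r" if "0 \<le> r" for r
    using that uG[of r] u0 thpos by (auto simp: y_def G_def)
  have "continuous_on {-th..} y"
    using yhc[of u] by (rule continuous_on_eq) (simp add: yyh)
  moreover have "\<forall>r. r < -th \<longrightarrow> y r = 0" by (simp add: y_def)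
  moreover have "\<forall>v\<in>{-th..0}. y v = phi v" by (simp add: y_def)
  moreover have "(y has_vector_derivative (A t (y t) + b *\<^sub>R (y t - h *v y (t - th)))) (at t within {0..})"
    if t0: "0 \<le> t" for t
  proof -
    have I: "((\<lambda>x. integral {0..x} (F u)) has_vector_derivative F u t) (at t within {0..t+1})"
      by (rule integral_has_vector_derivative[OF Fci]) (use t0 in auto)
    have "(G u has_vector_derivative F u t) (at t within {0..t+1})"
      unfolding G_def[abs_def] using has_vector_derivative_add[OF has_vector_derivative_const I] by simp
    moreover have "at t within {0..t+1} = at t within {0..}"
      by (rule at_within_nhd[where S="{..<t+1}"]) auto
    ultimately have "(G u has_vector_derivative F u t) (at t within {0..})" by simp
    then have "(y has_vector_derivative F u t) (at t within {0..})"
      by (rule has_vector_derivative_transform_within[where d=1]) (use t0 yG in auto)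
    moreover have "F u t = A t (y t) + b *\<^sub>R (y t - h *v y (t - th))"
    proof -
      have "y t = exp (K*t) *\<^sub>R apply_bcontfun u t" using t0 u0 thpos by (auto simp: y_def)
      moreover have "y (t - th) = yh u (t - th)" using t0 by (intro yyh) auto
      ultimately show ?thesis by (simp add: F_def)
    qed
    ultimately show ?thesis by simp
  qed
  ultimately show ?thesis by blast
qed

lemma equiv_deriv:
  fixes f :: "real^'n \<Rightarrow> real^'n" and g :: "real^'n^'n"
  assumes deriv: "\<And>z. (f has_derivative blinfun_apply (Df z)) (at z)"
    and eq: "\<And>z. f (g *v z) = g *v f z"
  shows "Df (g *v v) (g *v w) = g *v (Df v w)"
proof -
  have d1: "((\<lambda>z. f (g *v z)) has_derivative (\<lambda>w. Df (g *v v) (g *v w))) (at v)"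
    by (rule has_derivative_compose[OF bounded_linear_imp_has_derivative[OF matrix_vector_mul_bounded_linear] deriv])
  have d2: "((\<lambda>z. g *v f z) has_derivative (\<lambda>w. g *v Df v w)) (at v)"
    by (rule bounded_linear.has_derivative[OF matrix_vector_mul_bounded_linear deriv])
  have "(\<lambda>z. f (g *v z)) = (\<lambda>z. g *v f z)" using eq by auto
  with d1 have d1': "((\<lambda>z. g *v f z) has_derivative (\<lambda>w. Df (g *v v) (g *v w))) (at v)" by simp
  have "(\<lambda>w. Df (g *v v) (g *v w)) = (\<lambda>w. g *v Df v w)"
    by (rule has_derivative_unique[OF d1' d2])
  then show ?thesis by metis
qed

definition seg :: "real \<Rightarrow> (real \<Rightarrow> real^'n) \<Rightarrow> real \<Rightarrow> real^'n^'n \<Rightarrow> real \<Rightarrow> real^'n" where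
  "seg th y s g = (\<lambda>v. if v \<in> {-th..0} then g *v y (s + v) else 0)"

lemma mat_act_seg: "mat_act M (seg th y s g) = seg th y s (M ** g)"
  by (auto simp: mat_act_def seg_def matrix_vector_mul_assoc)

lemma dde_uniq:
  assumes Abnd: "\<And>t. norm (Df (x t)) \<le> L" and Bh: "\<And>w. norm (h *v w) \<le> Bh * norm w" "0 \<le> Bh"
    and th: "0 \<le> th"
    and s1: "dde_sol Df x b h th 0 phi y1" and s2: "dde_sol Df x b h th 0 phi y2"
  shows "y1 = y2"
proof
  fix r
  show "y1 r = y2 r"
  proof (cases "r < 0")
    case r0: True
    show ?thesis
    proof (cases "r < -th")
      case True then show ?thesis using s1 s2 by (simp add: dde_sol_def)
    next
      case False
      with r0 have "r \<in> {-th..0}" by auto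
      then have "y1 (0 + r) = phi r" "y2 (0 + r) = phi r" using s1 s2 unfolding dde_sol_def by blast+
      then show ?thesis by simp
    qed
  next
    case False
    define e where "e t = y1 t - y2 t" for t
    define e' where "e' t = Df (x t) (e t) + b *\<^sub>R (e t - h *v e (t - th))" for t
    have L0: "0 \<le> L" using Abnd[of 0] norm_ge_zero order_trans by blast
    have "e t = 0" if "0 \<le> t" for t
    proof (rule uniq_lemma[where a=0 and th=th and C="L + \<bar>b\<bar> + \<bar>b\<bar> * Bh" and e'=e'])
      show "continuous_on {0..} e" unfolding e_def[abs_def]
        using s1 s2 th unfolding dde_sol_def
        by (intro continuous_intros) (auto intro: continuous_on_subset)
      show "e r = 0" if "0 - th \<le> r" "r \<le> 0" for r
      proof -
        have "r \<in> {-th..0}" using that by auto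
        then have "y1 (0 + r) = phi r" "y2 (0 + r) = phi r" using s1 s2 unfolding dde_sol_def by blast+
        then show ?thesis by (simp add: e_def)
      qed
      show "0 \<le> L + \<bar>b\<bar> + \<bar>b\<bar> * Bh" using L0 Bh by simp
      show "(e has_vector_derivative e' t) (at t within {0..})" if "0 \<le> t" for t
      proof -
        have "((\<lambda>t. y1 t - y2 t) has_vector_derivative
            (Df (x t) (y1 t) + b *\<^sub>R (y1 t - h *v y1 (t - th))) - (Df (x t) (y2 t) + b *\<^sub>R (y2 t - h *v y2 (t - th))))
            (at t within {0..})"
          using s1 s2 that unfolding dde_sol_def by (intro has_vector_derivative_diff) auto
        then show ?thesis unfolding e_def[abs_def] e'_def
          by (simp add: blinfun.diff_right matrix_vector_mult_diff_distrib scaleR_diff_right algebra_simps)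
      qed
      show "norm (e' t) \<le> (L + \<bar>b\<bar> + \<bar>b\<bar> * Bh) * (norm (e t) + norm (e (t - th)))" if "0 \<le> t" for t
        unfolding e'_def by (rule lin_bound[OF Abnd Bh(1)]) (use Bh in auto)
    qed (use th that in auto)
    then show ?thesis using False by (simp add: e_def)
  qed
qed

lemma shift_lemma:
  assumes uniq: "\<And>phi y1 y2. dde_sol Df x b h th 0 phi y1 \<Longrightarrow> dde_sol Df x b h th 0 phi y2 \<Longrightarrow> y1 = y2"
    and sol: "dde_sol Df x b h th 0 phi y" and sg: "0 \<le> sg" and t: "0 \<le> t" and th: "0 \<le> th"
    and gh: "g ** h = h ** g" and gD: "\<And>r w. g *v Df (x (r + sg)) w = Df (x r) (g *v w)"
  shows "solop Df x b h th t 0 (seg th y sg g) = seg th y (t + sg) g"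
proof -
  define z where "z r = (if r < -th then 0 else g *v y (r + sg))" for r
  have yc: "continuous_on {-th..} y" using sol by (simp add: dde_sol_def)
  have yd: "\<And>t. 0 \<le> t \<Longrightarrow> (y has_vector_derivative
         (Df (x t) (y t) + b *\<^sub>R (y t - h *v y (t - th)))) (at t within {0..})"
    using sol by (simp add: dde_sol_def)
  have zs: "dde_sol Df x b h th 0 (seg th y sg g) z"
    unfolding dde_sol_def
  proof (intro conjI allI impI ballI)
    have "continuous_on {-th..} (\<lambda>r. y (r + sg))"
      by (rule continuous_on_compose2[OF yc]) (use sg in \<open>auto intro!: continuous_intros\<close>)
    then have "continuous_on {-th..} (\<lambda>r. g *v y (r + sg))"
      by (rule bounded_linear.continuous_on[OF matrix_vector_mul_bounded_linear])
    then have "continuous_on {-th..} z"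
      by (rule continuous_on_eq) (auto simp: z_def)
    then show "continuous_on {0 - th..} z" by simp
    show "z r = 0" if "r < 0 - th" for r using that by (simp add: z_def)
    show "z (0 + v) = seg th y sg g v" if "v \<in> {-th..0}" for v
      using that by (auto simp: z_def seg_def add.commute)
    fix r :: real assume r: "0 \<le> r"
    have c1: "((\<lambda>r. r + sg) has_vector_derivative 1) (at r within {0..})"
      by (auto intro!: derivative_eq_intros)
    have img: "(\<lambda>r. r + sg) ` {0..} = {sg..}"
    proof (intro equalityI subsetI)
      fix z assume "z \<in> (\<lambda>r. r + sg) ` {0..}" then show "z \<in> {sg..}" by auto
    next
      fix z assume "z \<in> {sg..}" then show "z \<in> (\<lambda>r. r + sg) ` {0..}"
        by (intro image_eqI[of _ _ "z - sg"]) auto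
    qed
    have "(y has_vector_derivative (Df (x (r + sg)) (y (r + sg)) + b *\<^sub>R (y (r + sg) - h *v y (r + sg - th))))
       (at (r + sg) within (\<lambda>r. r + sg) ` {0..})"
      unfolding img using yd[of "r + sg"] r sg
      by (auto intro: has_vector_derivative_within_subset)
    from vector_diff_chain_within[OF c1 this]
    have "((\<lambda>r. y (r + sg)) has_vector_derivative (Df (x (r + sg)) (y (r + sg)) + b *\<^sub>R (y (r + sg) - h *v y (r + sg - th))))
       (at r within {0..})" by (simp add: o_def)
    from bounded_linear.has_vector_derivative[OF matrix_vector_mul_bounded_linear this, of g]
    have d: "((\<lambda>r. g *v y (r + sg)) has_vector_derivative g *v (Df (x (r + sg)) (y (r + sg)) + b *\<^sub>R (y (r + sg) - h *v y (r + sg - th))))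
       (at r within {0..})" .
    have zr: "z r = g *v y (r + sg)" using r th by (simp add: z_def)
    have zr2: "z (r - th) = g *v y (r + sg - th)" using r th by (simp add: z_def algebra_simps)
    have "g *v (h *v y (r + sg - th)) = h *v (g *v y (r + sg - th))"
      by (simp add: matrix_vector_mul_assoc gh)
    then have val: "g *v (Df (x (r + sg)) (y (r + sg)) + b *\<^sub>R (y (r + sg) - h *v y (r + sg - th)))
       = Df (x r) (z r) + b *\<^sub>R (z r - h *v z (r - th))"
      unfolding zr zr2 by (simp add: matrix_vector_right_distrib matrix_vector_mult_scaleR
          matrix_vector_mult_diff_distrib gD)
    show "(z has_vector_derivative Df (x r) (z r) + b *\<^sub>R (z r - h *v z (r - th))) (at r within {0..})"
      unfolding val[symmetric]
      by (rule has_vector_derivative_transform_within[OF d zero_less_one]) (use r th in \<open>auto simp: z_def\<close>)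
  qed
  have eqz: "(THE w. dde_sol Df x b h th 0 (seg th y sg g) w) = z"
    by (rule the_equality[where P="\<lambda>w. dde_sol Df x b h th 0 (seg th y sg g) w", OF zs]) (rule uniq[OF _ zs])
  show ?thesis
    unfolding solop_def Let_def eqz
    using t th by (auto simp: z_def seg_def algebra_simps intro!: ext)
qed

theorem lemma3p2:
  fixes f :: "real^'n \<Rightarrow> real^'n"
    and Df :: "real^'n \<Rightarrow> (real^'n) \<Rightarrow>\<^sub>L (real^'n)"
    and G :: "(real^'n^'n) set"
    and x :: "real \<Rightarrow> real^'n"
    and p b :: real and n m :: nat and h :: "real^'n^'n"
  assumes deriv: "\<And>z. (f has_derivative blinfun_apply (Df z)) (at z)"
    and C2: "\<exists>D2. (\<forall>z. (Df has_derivative blinfun_apply (D2 z)) (at z)) \<and> continuous_on UNIV D2"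
    and grp: "compact_orth_group G"
    and equiv: "equivariant G f"
    and sol: "\<And>t. (x has_vector_derivative f (x t)) (at t)"
    and p_pos: "p > 0"
    and per: "\<And>t. x (t + p) = x t"
    and minper: "\<And>q. 0 < q \<Longrightarrow> q < p \<Longrightarrow> \<not> (\<forall>t. x (t + q) = x t)"
    and wave: "mat_group (Hgrp G x) Mod Kgrp G x \<cong> integer_mod_group n"
    and hH: "h \<in> Hgrp G x"
    and m: "m \<in> {1..n}"
    and th: "theta p x h = real m / real n * p"
  shows "\<forall>phi \<in> Cspace (theta p x h).
           (solop Df x b h (theta p x h) p 0 ^^ m) phi =
           (mat_act h ^^ n)
             (((mat_act (matrix_inv h) \<circ> solop Df x b h (theta p x h) (real m / real n * p) 0) ^^ n) phi)"
proof -
  have hG: "h \<in> G" using hH by (simp add: Hgrp_def)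
  have orth: "orthogonal_matrix h" using grp hG by (simp add: compact_orth_group_def)
  have heq: "\<And>z. f (h *v z) = h *v f z" using equiv hG by (simp add: equivariant_def)
  have xc: "continuous_on UNIV x"
    by (intro continuous_at_imp_continuous_on ballI has_vector_derivative_continuous[OF sol])
  have pern: "x (t + real k * p) = x t" for t k
  proof (induction k)
    case (Suc k)
    have "x (t + real (Suc k) * p) = x ((t + real k * p) + p)" by (simp add: algebra_simps)
    then show ?case using per Suc by simp
  qed simp
  have perz: "x (t + of_int k * p) = x t" for t k
  proof (cases "k \<ge> 0")
    case True
    obtain j where "k = int j" using True by (intro that[of "nat k"]) simp
    then show ?thesis using pern by simp
  next
    case False
    obtain j where k: "k = - int j" using False by (intro that[of "nat (-k)"]) simp
    have "x (t - real j * p + real j * p) = x (t - real j * p)" by (rule pern)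
    then show ?thesis using k by simp
  qed
  have red: "\<exists>s. 0 \<le> s \<and> s < p \<and> x s = x t" for t
  proof -
    define s where "s = t - of_int \<lfloor>t / p\<rfloor> * p"
    have "of_int \<lfloor>t / p\<rfloor> * p \<le> t / p * p" using p_pos by (intro mult_right_mono) auto
    then have s0: "0 \<le> s" using p_pos by (simp add: s_def)
    have "t / p * p < (of_int \<lfloor>t / p\<rfloor> + 1) * p"
      using p_pos real_of_int_floor_add_one_gt[of "t/p"] by (intro mult_strict_right_mono) auto
    then have s1: "s < p" using p_pos by (simp add: s_def algebra_simps)
    have "x s = x (s + of_int \<lfloor>t / p\<rfloor> * p)" by (rule perz[symmetric])
    then have "x s = x t" by (simp add: s_def)
    then show ?thesis using s0 s1 by blast
  qed
  have rng: "range x = x ` {0..p}"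
  proof
    show "range x \<subseteq> x ` {0..p}"
    proof
      fix z assume "z \<in> range x"
      then obtain t where "z = x t" by auto
      with red[of t] show "z \<in> x ` {0..p}" by (metis atLeastAtMost_iff image_eqI less_imp_le)
    qed
  qed auto
  have cpt: "compact (range x)"
    unfolding rng by (rule compact_continuous_image[OF continuous_on_subset[OF xc] compact_Icc]) auto
  obtain R where R: "\<And>t. norm (x t) \<le> R"
    using compact_imp_bounded[OF cpt] unfolding bounded_iff by auto
  obtain D2 where D2: "\<And>z. (Df has_derivative blinfun_apply (D2 z)) (at z)" using C2 by auto
  have Dfc: "continuous_on UNIV Df"
    by (intro continuous_at_imp_continuous_on ballI has_derivative_continuous[OF D2])
  obtain L where L: "\<And>z. z \<in> cball 0 R \<Longrightarrow> norm (Df z) \<le> L"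
    using compact_imp_bounded[OF compact_continuous_image[OF continuous_on_subset[OF Dfc] compact_cball]]
    unfolding bounded_iff by blast
  have xin: "x t \<in> cball 0 R" for t using R by simp
  have Abnd: "norm (Df (x t)) \<le> L" for t using L xin by blast
  have L0: "0 \<le> L" using Abnd[of 0] norm_ge_zero order_trans by blast
  have lip: "norm (f z1 - f z2) \<le> L * norm (z1 - z2)" if "z1 \<in> cball 0 R" "z2 \<in> cball 0 R" for z1 z2
  proof (rule differentiable_bound[where S="cball 0 R" and f'="\<lambda>z. blinfun_apply (Df z)"])
    show "convex (cball (0::real^'n) R)" by simp
    show "(f has_derivative blinfun_apply (Df z)) (at z within cball 0 R)" for z
      by (rule has_derivative_subset[OF deriv]) auto
    show "onorm (blinfun_apply (Df z)) \<le> L" if "z \<in> cball 0 R" for z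
      using L[OF that] by (simp add: norm_blinfun.rep_eq)
  qed (use that in auto)
  have hxin: "h *v x t \<in> range x" for t
    using hH unfolding Hgrp_def by blast
  obtain tau0 where tau0: "h *v x 0 = x tau0" using hxin[of 0] by auto
  obtain tau where tau: "0 \<le> tau" "tau < p" "x tau = x tau0" using red[of tau0] by auto
  define e where "e t = h *v x t - x (t + tau)" for t
  define e' where "e' t = h *v f (x t) - f (x (t + tau))" for t
  have ed: "(e has_vector_derivative e' t) (at t)" for t
  proof -
    have d1: "((\<lambda>t. h *v x t) has_vector_derivative h *v f (x t)) (at t)"
      by (rule bounded_linear.has_vector_derivative[OF matrix_vector_mul_bounded_linear sol])
    have c1: "((\<lambda>t. t + tau) has_vector_derivative 1) (at t)" by (auto intro!: derivative_eq_intros)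
    have d2: "((\<lambda>t. x (t + tau)) has_vector_derivative f (x (t + tau))) (at t)"
      using vector_diff_chain_at[OF c1 sol[of "t + tau"]] by (simp add: o_def)
    show ?thesis unfolding e_def[abs_def] e'_def by (rule has_vector_derivative_diff[OF d1 d2])
  qed
  have ec: "continuous_on UNIV e"
    by (intro continuous_at_imp_continuous_on ballI has_vector_derivative_continuous[OF ed])
  have eb: "norm (e' t) \<le> L * norm (e t)" for t
  proof -
    have "h *v x t \<in> cball 0 R" using hxin[of t] xin by auto
    then show ?thesis unfolding e'_def e_def heq[symmetric] using lip xin by blast
  qed
  have e00: "e 0 = 0" using tau tau0 by (simp add: e_def)
  have efw: "e t = 0" if "0 \<le> t" for t
  proof (rule uniq_lemma[where a=0 and th=0 and C=L and e'=e'])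
    show "continuous_on {0..} e" using ec by (rule continuous_on_subset) auto
    show "e r = 0" if "0 - 0 \<le> r" "r \<le> 0" for r using that e00 by simp
    show "(e has_vector_derivative e' t) (at t within {0..})" for t
      by (rule has_vector_derivative_at_within[OF ed])
    show "norm (e' t) \<le> L * (norm (e t) + norm (e (t - 0)))" for t
    proof -
      have "L * norm (e t) \<le> L * (norm (e t) + norm (e (t - 0)))" using L0 by (intro mult_left_mono) auto
      then show ?thesis using eb[of t] by linarith
    qed
  qed (use that L0 in auto)
  have ebw: "e (- t) = 0" if "0 \<le> t" for t
  proof -
    define e2 where "e2 t = e (- t)" for t
    have "e2 t = 0"
    proof (rule uniq_lemma[where a=0 and th=0 and C=L and e'="\<lambda>t. - e' (- t)"])
      show "continuous_on {0..} e2" unfolding e2_def[abs_def]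
        by (rule continuous_on_compose2[OF ec]) (auto intro!: continuous_intros)
      show "e2 r = 0" if "0 - 0 \<le> r" "r \<le> 0" for r using that e00 by (simp add: e2_def)
      show "(e2 has_vector_derivative - e' (- t)) (at t within {0..})" for t
      proof -
        have c0: "((\<lambda>t. - t) has_real_derivative -1) (at t)" by (rule derivative_eq_intros refl)+
        have c1: "((\<lambda>t. - t) has_vector_derivative -1) (at t)"
          using c0 by (simp add: has_real_derivative_iff_has_vector_derivative)
        have "((e \<circ> (\<lambda>t. - t)) has_vector_derivative (-1) *\<^sub>R e' (- t)) (at t)"
          by (rule vector_diff_chain_at[OF c1 ed])
        then have "((\<lambda>t. e (- t)) has_vector_derivative - e' (- t)) (at t)" by (simp add: o_def)
        then show ?thesis unfolding e2_def[abs_def]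
          by (rule has_vector_derivative_at_within)
      qed
      show "norm (- e' (- t)) \<le> L * (norm (e2 t) + norm (e2 (t - 0)))" for t
      proof -
        have "L * norm (e (-t)) \<le> L * (norm (e2 t) + norm (e2 (t - 0)))" using L0 by (intro mult_left_mono) (auto simp: e2_def)
        then show ?thesis using eb[of "-t"] by simp
      qed
    qed (use that L0 in auto)
    then show ?thesis by (simp add: e2_def)
  qed
  have eall: "e t = 0" for t
    using efw ebw by (metis linorder_le_cases neg_0_le_iff_le minus_minus)
  define P where "P s \<longleftrightarrow> 0 \<le> s \<and> s < p \<and> (\<forall>t. h *v x t = x (t + s))" for s
  have Ptau: "P tau" using tau eall by (simp add: P_def e_def)
  have Puniq: "s1 = s2" if "P s1" "P s2" for s1 s2
  proof (rule ccontr)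
    assume ne: "s1 \<noteq> s2"
    have key: "\<forall>t. x (t + (b2 - a2)) = x t" if "P a2" "P b2" "a2 < b2" for a2 b2
    proof
      fix t
      have "x (t + (b2 - a2)) = x ((t - a2) + b2)" by (simp add: algebra_simps)
      also have "\<dots> = h *v x (t - a2)" using that(2) by (simp add: P_def)
      also have "\<dots> = x ((t - a2) + a2)" using that(1) by (simp add: P_def)
      finally show "x (t + (b2 - a2)) = x t" by simp
    qed
    show False
    proof (cases "s1 < s2")
      case True
      then show False using key[OF that True] minper[of "s2 - s1"] that by (auto simp: P_def)
    next
      case False
      then have "s2 < s1" using ne by auto
      then show False using key[OF that(2,1)] minper[of "s1 - s2"] that by (auto simp: P_def)
    qed
  qed
  have "\<exists>!s. P s" using Ptau Puniq by blast
  then have Pth: "P (theta p x h)" unfolding theta_def P_def[symmetric] by (rule theI')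
  have n0: "0 < n" and m1: "1 \<le> m" using m by auto
  have thpos: "0 < theta p x h" using th n0 m1 p_pos by simp
  have nth: "real n * theta p x h = real m * p" using th n0 by simp
  define T where "T = theta p x h"
  have Tpos: "0 < T" using thpos by (simp add: T_def)
  have hsh: "\<And>t. h *v x t = x (t + T)" using Pth by (simp add: P_def T_def)
  have inv: "h ** matrix_inv h = mat 1 \<and> matrix_inv h ** h = mat 1"
    unfolding matrix_inv_def
    by (rule someI[of _ "transpose h"]) (use orth in \<open>simp add: orthogonal_matrix_def\<close>)
  define hi where "hi = matrix_inv h"
  have hi1: "h ** hi = mat 1" and hi2: "hi ** h = mat 1" using inv by (auto simp: hi_def)
  have Dsym: "Df (x (r + T)) (h *v w) = h *v Df (x r) w" for r w
    unfolding hsh[symmetric] by (rule equiv_deriv[OF deriv heq])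
  have hiD: "hi *v Df (x (r + T)) w = Df (x r) (hi *v w)" for r w
  proof -
    have "Df (x (r + T)) w = Df (x (r + T)) (h *v (hi *v w))"
      by (simp add: matrix_vector_mul_assoc hi1)
    also have "\<dots> = h *v Df (x r) (hi *v w)" by (rule Dsym)
    finally show ?thesis by (simp add: matrix_vector_mul_assoc hi2)
  qed
  obtain Bh where Bh: "Bh > 0" "\<And>w. norm (h *v w) \<le> norm w * Bh"
    using bounded_linear.pos_bounded[OF matrix_vector_mul_bounded_linear[of h]] by blast
  have Bh': "\<And>w. norm (h *v w) \<le> Bh * norm w" using Bh by (simp add: mult.commute)
  have soluniq: "y1 = y2" if "dde_sol Df x b h T 0 phi y1" "dde_sol Df x b h T 0 phi y2" for phi y1 y2
    by (rule dde_uniq[OF Abnd Bh' _ _ that]) (use Bh Tpos in auto)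
  have Acont: "continuous_on UNIV (\<lambda>t. Df (x t))"
    by (rule continuous_on_compose2[OF Dfc xc]) auto
  define gp where "gp k = (((**) hi) ^^ k) (mat 1)" for k
  have gp_comm: "gp k ** h = h ** gp k" for k
  proof (induction k)
    case 0 then show ?case by (simp add: gp_def)
  next
    case (Suc k)
    have "gp (Suc k) ** h = hi ** (gp k ** h)" by (simp add: gp_def matrix_mul_assoc)
    also have "\<dots> = (hi ** h) ** gp k" using Suc by (simp add: matrix_mul_assoc)
    also have "\<dots> = (h ** hi) ** gp k" using hi1 hi2 by simp
    also have "\<dots> = h ** gp (Suc k)" by (simp add: gp_def matrix_mul_assoc)
    finally show ?case .
  qed
  have gp_D: "gp k *v Df (x (r + real k * T)) w = Df (x r) (gp k *v w)" for k r w
  proof (induction k arbitrary: r w)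
    case 0 then show ?case by (simp add: gp_def)
  next
    case (Suc k)
    have "gp (Suc k) *v Df (x (r + real (Suc k) * T)) w = hi *v (gp k *v Df (x ((r + T) + real k * T)) w)"
      by (simp add: gp_def matrix_vector_mul_assoc algebra_simps)
    also have "\<dots> = hi *v Df (x (r + T)) (gp k *v w)" using Suc by simp
    also have "\<dots> = Df (x r) (hi *v (gp k *v w))" by (rule hiD)
    also have "\<dots> = Df (x r) (gp (Suc k) *v w)" by (simp add: gp_def matrix_vector_mul_assoc)
    finally show ?case .
  qed
  have fin: "(mat_act h ^^ j) (seg T y s (gp j)) = seg T y s (mat 1)" for j y s
  proof (induction j)
    case 0 then show ?case by (simp add: gp_def)
  next
    case (Suc j)
    have "h ** (hi ** gp j) = (h ** hi) ** gp j" by (rule matrix_mul_assoc)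
    then have "h ** gp (Suc j) = gp j" by (simp add: gp_def hi1)
    then have eq: "mat_act h (seg T y s (gp (Suc j))) = seg T y s (gp j)"
      by (simp add: mat_act_seg)
    have "(mat_act h ^^ Suc j) (seg T y s (gp (Suc j))) = (mat_act h ^^ j) (mat_act h (seg T y s (gp (Suc j))))"
      by (simp only: funpow_Suc_right comp_apply)
    also have "\<dots> = (mat_act h ^^ j) (seg T y s (gp j))" by (simp only: eq)
    also have "\<dots> = seg T y s (mat 1)" by (rule Suc.IH)
    finally show ?case .
  qed
  have main: "(solop Df x b h T p 0 ^^ m) phi =
           (mat_act h ^^ n) (((mat_act hi \<circ> solop Df x b h T T 0) ^^ n) phi)"
    if phiC: "phi \<in> Cspace T" for phi
  proof -
    have phic: "continuous_on {-T..0} phi" and phi0: "\<And>v. v \<notin> {-T..0} \<Longrightarrow> phi v = 0"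
      using phiC by (auto simp: Cspace_def)
    obtain y where y: "continuous_on {-T..} y" "\<forall>r. r < -T \<longrightarrow> y r = 0" "\<forall>v\<in>{-T..0}. y v = phi v"
        "\<forall>t\<ge>0. (y has_vector_derivative (Df (x t) (y t) + b *\<^sub>R (y t - h *v y (t - T)))) (at t within {0..})"
      using dde_exist[OF Acont Abnd Tpos phic, of b h] by blast
    have ys: "dde_sol Df x b h T 0 phi y" using y by (simp add: dde_sol_def)
    have seg0: "seg T y 0 (mat 1) = phi"
      using y(3) phi0 by (auto simp: seg_def intro!: ext)
    have Lk: "(solop Df x b h T p 0 ^^ k) phi = seg T y (real k * p) (mat 1)" for k
    proof (induction k)
      case 0 then show ?case using seg0 by simp
    next
      case (Suc k)
      have "solop Df x b h T p 0 (seg T y (real k * p) (mat 1)) = seg T y (p + real k * p) (mat 1)"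
        by (rule shift_lemma[OF soluniq ys]) (use p_pos Tpos pern in auto)
      then show ?case using Suc by (simp add: algebra_simps)
    qed
    have Rk: "((mat_act hi \<circ> solop Df x b h T T 0) ^^ k) phi = seg T y (real k * T) (gp k)" for k
    proof (induction k)
      case 0 then show ?case using seg0 by (simp add: gp_def)
    next
      case (Suc k)
      have "solop Df x b h T T 0 (seg T y (real k * T) (gp k)) = seg T y (T + real k * T) (gp k)"
        by (rule shift_lemma[OF soluniq ys]) (use Tpos gp_comm gp_D in auto)
      then show ?case using Suc by (simp add: mat_act_seg gp_def algebra_simps)
    qed
    show ?thesis using Lk[of m] Rk[of n] fin[of n y "real n * T"] nth by (simp add: T_def)
  qed
  show ?thesis using main th by (simp add: T_def hi_def)
qed

end
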